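(* Let $1\le t$ and $x_{1:t}\in\mathcal X^t$. Then for every $i\in\mathcal X$, $$P_{\mathrm{Bayes}}(x_{t+1}=i\mid x_{1:t}) = \begin{cases}\dfrac{n^t_i+\frac12}{t+\frac{m_t}2+\beta_t} & \text{if } n^t_i>0,\\[2ex] \dfrac{\beta_t/(D-m_t)}{t+\frac{m_t}2+\beta_t} & \text{if } n^t_i=0,\end{cases}\qquad \beta_t:=\frac{D-m_t}{2}\,\frac{\gamma^t_{m_t+1}}{\gamma^t_{m_t}},$$ where for $1\le k\le D$, $\gamma^t_k:=\sum_{m'=k}^{D}\binom{D-k}{m'-k}\binom{D}{m'}^{-1}\frac{\Gamma(\frac12 m')}{\Gamma(t+1+\frac12 m')}$ and $\gamma^t_{D+1}:=0$ (the second case arising only when $m_t<D$).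
   Context: Let $\mathcal X$ be a finite alphabet of size $D$. For $x_{1:t}$, $n^t_i$ is the number of occurrences of $i$, $\mathcal A_t=\{x_1,\dots,x_t\}$, $m_t=|\mathcal A_t|$. For a nonempty $\mathcal A'\subseteq\mathcal X$, the KT estimator on $\mathcal A'$ assigns to a sequence $y_{1:s}$ the probability $P_{\mathrm{KT}_{\mathcal A'}}(y_{1:s})=\frac{\Gamma(|\mathcal A'|/2)}{\Gamma(s+|\mathcal A'|/2)}\prod_{i\in\mathcal A'}\frac{\Gamma(c_i+\frac12)}{\Gamma(\frac12)}$ if all symbols of $y_{1:s}$ lie in $\mathcal A'$ (with $c_i$ the count of $i$ in $y_{1:s}$), and $0$ otherwise. Bayesian sub-alphabet weighting: $P_{\mathrm{Bayes}}(y_{1:s})=\sum_{\emptyset\ne\mathcal A'\subseteq\mathcal X}\frac{1}{D\binom{D}{|\mathcal A'|}}P_{\mathrm{KT}_{\mathcal A'}}(y_{1:s})$, and $P_{\mathrm{Bayes}}(x_{t+1}=i\mid x_{1:t})=P_{\mathrm{Bayes}}(x_{1:t}i)/P_{\mathrm{Bayes}}(x_{1:t})$. *)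

theory Defs
  imports "HOL-Analysis.Analysis"
begin

definition cnt :: "'a list \<Rightarrow> 'a \<Rightarrow> nat" where
  "cnt ys i = count_list ys i"

definition P_KT :: "'a set \<Rightarrow> 'a list \<Rightarrow> real" where
  "P_KT A ys = (if set ys \<subseteq> A then
      Gamma (real (card A) / 2) / Gamma (real (length ys) + real (card A) / 2) *
      (\<Prod>i\<in>A. Gamma (real (cnt ys i) + 1/2) / Gamma (1/2))
    else 0)"

definition P_Bayes :: "'a set \<Rightarrow> 'a list \<Rightarrow> real" where
  "P_Bayes X ys = (\<Sum>A\<in>{A. A \<subseteq> X \<and> A \<noteq> {}}.
      1 / (real (card X) * real (card X choose card A)) * P_KT A ys)"

definition P_Bayes_cond :: "'a set \<Rightarrow> 'a list \<Rightarrow> 'a \<Rightarrow> real" where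
  "P_Bayes_cond X xs i = P_Bayes X (xs @ [i]) / P_Bayes X xs"

definition gam :: "nat \<Rightarrow> nat \<Rightarrow> nat \<Rightarrow> real" where
  "gam D t k = (if k = D + 1 then 0 else
     (\<Sum>m'=k..D. real ((D - k) choose (m' - k)) / real (D choose m') *
        Gamma (real m' / 2) / Gamma (real t + 1 + real m' / 2)))"

definition beta :: "nat \<Rightarrow> nat \<Rightarrow> nat \<Rightarrow> real" where
  "beta D t m = (real D - real m) / 2 * (gam D t (m + 1) / gam D t m)"

end

theory Submission
  imports Defs
begin

lemma Gamma_plus1_pos: "(z::real) > 0 \<Longrightarrow> Gamma (z + 1) = z * Gamma z"
  by (rule Gamma_plus1) (auto dest: nonpos_Ints_nonpos)

definition GG :: "nat \<Rightarrow> real \<Rightarrow> nat \<Rightarrow> real" where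
  "GG D s k = (\<Sum>m'=k..D. real ((D - k) choose (m' - k)) / real (D choose m') *
        Gamma (real m' / 2) / Gamma (s + real m' / 2))"

lemma gam_GG: "k \<le> D + 1 \<Longrightarrow> gam D t k = GG D (real t + 1) k"
  unfolding gam_def GG_def by auto

lemma GG_pos: assumes "1 \<le> k" "k \<le> D" "s > 0" shows "GG D s k > 0"
  unfolding GG_def
proof (rule sum_pos2[where i=k])
  show "0 < real ((D - k) choose (k - k)) / real (D choose k) * Gamma (real k / 2) / Gamma (s + real k / 2)"
    using assms by (auto intro!: divide_pos_pos mult_pos_pos)
  show "\<And>i. i \<in> {k..D} \<Longrightarrow> 0 \<le> real ((D - k) choose (i - k)) / real (D choose i) * Gamma (real i / 2) / Gamma (s + real i / 2)"
    using assms by (auto intro!: divide_nonneg_pos mult_nonneg_nonneg less_imp_le[OF Gamma_real_pos])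
qed (use assms in auto)

lemma alg: "(x::real) \<noteq> 0 \<Longrightarrow> c > 0 \<Longrightarrow> a > 0 \<Longrightarrow> B / c * G / a = B * x * (G / (x * a) / c)"
  by (simp add: field_simps)

lemma alg2: "(C::real) \<noteq> 0 \<Longrightarrow> D \<noteq> 0 \<Longrightarrow> (k * C / D * A) / (C / D * B) = k * A / B"
  by (simp add: field_simps)

lemma alg3: "(G1::real) > 0 \<Longrightarrow> k * G1 / (a * G1 + e * G2) = k / (a + e * (G2 / G1))"
  by (simp add: field_simps)

lemma alg4: "(G1::real) > 0 \<Longrightarrow> d \<noteq> 0 \<Longrightarrow> 1/2 * G2 / (a * G1 + d / 2 * G2) = (d / 2 * (G2 / G1) / d) / (a + d / 2 * (G2 / G1))"
  by (simp add: field_simps)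

lemma GG_rec: assumes "1 \<le> m" "m \<le> D" "s > 0"
  shows "GG D s m = (s + real m / 2) * GG D (s + 1) m + (real D - real m) / 2 * GG D (s + 1) (m + 1)"
proof -
  define g where "g m' = Gamma (real m' / 2) / Gamma (s + 1 + real m' / 2) / real (D choose m')" for m'
  have G1: "Gamma (s + 1 + real m' / 2) = (s + real m' / 2) * Gamma (s + real m' / 2)" for m'
    using Gamma_plus1_pos[of "s + real m' / 2"] assms by (simp add: algebra_simps)
  have tm: "real ((D - m) choose (m' - m)) / real (D choose m') * Gamma (real m' / 2) / Gamma (s + real m' / 2)
     = (s + real m / 2) * (real ((D - m) choose (m' - m)) * g m')
       + (real D - real m) / 2 * (if m' = m then 0 else real ((D - (m+1)) choose (m' - (m+1))) * g m')"
    if "m' \<in> {m..D}" for m'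
  proof -
    have pos: "s + real m' / 2 > 0" using assms by auto
    have key: "real ((D - m) choose (m' - m)) * (real m' - real m) = (if m' = m then 0 else (real D - real m) * real ((D - (m+1)) choose (m' - (m+1))))"
    proof (cases "m' = m")
      case False
      then have "m' - m = Suc (m' - (m+1))" using that by auto
      moreover have "D - m = Suc (D - (m+1))" using that False by auto
      ultimately have "real ((D - m) choose (m' - m)) * real (m' - m) = real (D - m) * real ((D - (m+1)) choose (m' - (m+1)))"
        by (metis Suc_times_binomial_eq of_nat_mult mult.commute) 
      then show ?thesis using False that by (simp add: of_nat_diff)
    qed simp
    have "real ((D - m) choose (m' - m)) / real (D choose m') * Gamma (real m' / 2) / Gamma (s + real m' / 2)
        = real ((D - m) choose (m' - m)) * (s + real m' / 2) * g m'"
    proof -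
      have "real (D choose m') > 0" using that by auto
      moreover have "Gamma (s + real m' / 2) > 0" using pos by auto
      ultimately have "real ((D - m) choose (m' - m)) / real (D choose m') * Gamma (real m' / 2) / Gamma (s + real m' / 2)
        = real ((D - m) choose (m' - m)) * (s + real m' / 2) * (Gamma (real m' / 2) / ((s + real m' / 2) * Gamma (s + real m' / 2)) / real (D choose m'))"
        using pos by (intro alg) auto
      then show ?thesis unfolding g_def G1 .
    qed
    also have "\<dots> = (s + real m / 2) * (real ((D - m) choose (m' - m)) * g m') + (real ((D - m) choose (m' - m)) * (real m' - real m)) / 2 * g m'"
      by (simp add: field_simps)
    also have "\<dots> = (s + real m / 2) * (real ((D - m) choose (m' - m)) * g m')
       + (real D - real m) / 2 * (if m' = m then 0 else real ((D - (m+1)) choose (m' - (m+1))) * g m')"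
      unfolding key by simp
    finally show ?thesis .
  qed
  have e1: "GG D (s+1) m = (\<Sum>m'=m..D. real ((D - m) choose (m' - m)) * g m')"
    unfolding GG_def g_def by (intro sum.cong) (auto simp: add_ac)
  have e2: "GG D (s+1) (m+1) = (\<Sum>m'=m..D. (if m' = m then 0 else real ((D - (m+1)) choose (m' - (m+1))) * g m'))"
  proof -
    have "{m..D} = insert m {m+1..D}" using assms by auto
    then have "(\<Sum>m'=m..D. (if m' = m then 0 else real ((D - (m+1)) choose (m' - (m+1))) * g m'))
       = (\<Sum>m'=m+1..D. real ((D - (m+1)) choose (m' - (m+1))) * g m')"
      by (simp add: sum.insert_if)
    then show ?thesis unfolding GG_def g_def by (auto simp: add_ac intro!: sum.cong)
  qed
  have "GG D s m = (\<Sum>m'=m..D. (s + real m / 2) * (real ((D - m) choose (m' - m)) * g m')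
       + (real D - real m) / 2 * (if m' = m then 0 else real ((D - (m+1)) choose (m' - (m+1))) * g m'))"
    unfolding GG_def by (rule sum.cong[OF refl tm])
  then show ?thesis unfolding e1 e2 by (simp add: sum.distrib sum_distrib_left)
qed

lemma sum_Pow_card:
  assumes "finite T"
  shows "(\<Sum>B\<in>Pow T. h (card B)) = (\<Sum>k=0..card T. real (card T choose k) * (h k :: real))"
proof -
  have "(\<Sum>B\<in>Pow T. h (card B)) = (\<Sum>k\<in>{0..card T}. \<Sum>B\<in>{B. B \<in> Pow T \<and> card B = k}. h (card B))"
    by (rule sum.group[symmetric]) (use assms in \<open>auto intro: card_mono\<close>)
  also have "\<dots> = (\<Sum>k=0..card T. real (card T choose k) * h k)"
  proof (rule sum.cong[OF refl])
    fix k
    have "(\<Sum>B\<in>{B. B \<in> Pow T \<and> card B = k}. h (card B)) = (\<Sum>B\<in>{B. B \<subseteq> T \<and> card B = k}. h k)"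
      by (rule sum.cong) auto
    also have "\<dots> = real (card T choose k) * h k" using n_subsets[OF assms, of k] by simp
    finally show "(\<Sum>B\<in>{B. B \<in> Pow T \<and> card B = k}. h (card B)) = real (card T choose k) * h k" .
  qed
  finally show ?thesis .
qed

lemma sum_supersets:
  assumes "finite X" "S \<subseteq> X" "S \<noteq> {}"
  shows "(\<Sum>A\<in>{A. A \<subseteq> X \<and> A \<noteq> {}}. if S \<subseteq> A then h (card A) else 0)
    = (\<Sum>k=card S..card X. real ((card X - card S) choose (k - card S)) * (h k :: real))"
proof -
  have fin: "finite {A. A \<subseteq> X \<and> A \<noteq> {}}" using assms(1) by auto
  have fS: "finite S" using assms finite_subset by blast
  have "(\<Sum>A\<in>{A. A \<subseteq> X \<and> A \<noteq> {}}. if S \<subseteq> A then h (card A) else 0)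
      = (\<Sum>A\<in>{A \<in> {A. A \<subseteq> X \<and> A \<noteq> {}}. S \<subseteq> A}. h (card A))"
    by (rule sum.inter_filter[OF fin, symmetric])
  also have "\<dots> = (\<Sum>B\<in>Pow (X - S). h (card (S \<union> B)))"
  proof (rule sum.reindex_bij_witness[where j="\<lambda>A. A - S" and i="\<lambda>B. S \<union> B"])
    fix A assume "A \<in> {A \<in> {A. A \<subseteq> X \<and> A \<noteq> {}}. S \<subseteq> A}"
    then have A: "A \<subseteq> X" "S \<subseteq> A" by auto
    show "S \<union> (A - S) = A" using A by (simp add: Un_absorb1 Un_Diff_cancel)
    show "A - S \<in> Pow (X - S)" using A by auto
    show "h (card (S \<union> (A - S))) = h (card A)" using A by (simp add: Un_absorb1 Un_Diff_cancel)
  next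
    fix B assume "B \<in> Pow (X - S)"
    then have B: "B \<subseteq> X" "B \<inter> S = {}" by auto
    show "S \<union> B - S = B" using B by auto
    show "S \<union> B \<in> {A \<in> {A. A \<subseteq> X \<and> A \<noteq> {}}. S \<subseteq> A}" using B assms by auto
  qed
  also have "\<dots> = (\<Sum>B\<in>Pow (X - S). h (card S + card B))"
  proof (rule sum.cong[OF refl])
    fix B assume "B \<in> Pow (X - S)"
    then have "finite B" "S \<inter> B = {}" using assms(1) finite_subset by auto
    then show "h (card (S \<union> B)) = h (card S + card B)" using fS by (simp add: card_Un_disjoint)
  qed
  also have "\<dots> = (\<Sum>k=0..card (X - S). real (card (X - S) choose k) * h (card S + k))"
    by (rule sum_Pow_card[where h="\<lambda>k. h (card S + k)"]) (use assms in auto)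
  also have "card (X - S) = card X - card S" using assms fS by (simp add: card_Diff_subset)
  also have "(\<Sum>k=0..card X - card S. real ((card X - card S) choose k) * h (card S + k))
     = (\<Sum>k=0 + card S..(card X - card S) + card S. real ((card X - card S) choose (k - card S)) * h k)"
    by (subst sum.shift_bounds_cl_nat_ivl) (simp add: add.commute)
  also have "(card X - card S) + card S = card X" using card_mono[OF assms(1,2)] by simp
  finally show ?thesis by simp
qed

lemma G_half: "Gamma (1/2::real) > 0" by (rule Gamma_real_pos) simp
lemma G_half_ne [simp]: "Gamma (1/2::real) \<noteq> 0" using G_half by (metis order_less_irrefl)

definition CC :: "'a list \<Rightarrow> real" where
  "CC ys = (\<Prod>j\<in>set ys. Gamma (real (cnt ys j) + 1/2) / Gamma (1/2))"

lemma P_KT_sup: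
  assumes "finite A" "set ys \<subseteq> A"
  shows "P_KT A ys = Gamma (real (card A) / 2) / Gamma (real (length ys) + real (card A) / 2) * CC ys"
proof -
  have "(\<Prod>i\<in>A. Gamma (real (cnt ys i) + 1/2) / Gamma (1/2)) = CC ys"
    unfolding CC_def
    by (rule prod.mono_neutral_right) (use assms G_half in \<open>auto simp: cnt_def count_list_0_iff\<close>)
  then show ?thesis unfolding P_KT_def using assms by simp
qed

lemma P_Bayes_formula:
  assumes "finite X" "set ys \<subseteq> X" "ys \<noteq> []"
  shows "P_Bayes X ys = CC ys / real (card X) * GG (card X) (real (length ys)) (card (set ys))"
proof -
  define D where "D = card X"
  define h where "h k = 1 / (real D * real (D choose k)) * (Gamma (real k / 2) / Gamma (real (length ys) + real k / 2) * CC ys)" for k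
  have "P_Bayes X ys = (\<Sum>A\<in>{A. A \<subseteq> X \<and> A \<noteq> {}}. if set ys \<subseteq> A then h (card A) else 0)"
    unfolding P_Bayes_def h_def D_def
  proof (rule sum.cong[OF refl])
    fix A assume "A \<in> {A. A \<subseteq> X \<and> A \<noteq> {}}"
    then have "finite A" using assms(1) finite_subset by auto
    then show "1 / (real (card X) * real (card X choose card A)) * P_KT A ys =
         (if set ys \<subseteq> A then 1 / (real (card X) * real (card X choose card A)) *
            (Gamma (real (card A) / 2) / Gamma (real (length ys) + real (card A) / 2) * CC ys) else 0)"
      by (cases "set ys \<subseteq> A") (simp_all add: P_KT_sup, simp add: P_KT_def)
  qed
  also have "\<dots> = (\<Sum>k=card (set ys)..D. real ((D - card (set ys)) choose (k - card (set ys))) * h k)"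
    unfolding D_def by (rule sum_supersets) (use assms in auto)
  also have "\<dots> = CC ys / real D * GG D (real (length ys)) (card (set ys))"
    unfolding GG_def sum_distrib_left h_def by (rule sum.cong[OF refl]) (simp add: field_simps)
  finally show ?thesis unfolding D_def .
qed


theorem mainTheorem8:
  fixes X :: "'a set" and xs :: "'a list" and i :: 'a
  assumes "finite X" and "X \<noteq> {}"
    and "set xs \<subseteq> X" and "1 \<le> length xs" and "i \<in> X"
  shows "P_Bayes_cond X xs i =
    (let t = length xs; D = card X; m = card (set xs); b = beta D t m in
      if cnt xs i > 0 then (real (cnt xs i) + 1/2) / (real t + real m / 2 + b)
      else (b / (real D - real m)) / (real t + real m / 2 + b))"
proof -
  define t where "t = length xs"
  define D where "D = card X"
  define S where "S = set xs"
  define m where "m = card S"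
  define c where "c = cnt xs i"
  define f where "f j = Gamma (real (cnt xs j) + 1/2) / Gamma (1/2)" for j
  have fS: "finite S" unfolding S_def by simp
  have ne: "xs \<noteq> []" using assms(4) by auto
  have m1: "1 \<le> m" unfolding m_def S_def using ne by (simp add: Suc_le_eq card_gt_0_iff)
  have mD: "m \<le> D" unfolding m_def D_def S_def using card_mono[OF assms(1,3)] .
  have Dpos: "real D > 0" using mD m1 by simp
  have tpos: "real t > 0" unfolding t_def using ne by simp
  have Cpos: "CC xs > 0" unfolding CC_def using G_half by (intro prod_pos) auto
  have cntapp: "cnt (xs @ [i]) j = cnt xs j + (if j = i then 1 else 0)" for j
    by (simp add: cnt_def)
  have Gt: "GG D (real t) m = (real t + real m / 2) * GG D (real t + 1) m + (real D - real m) / 2 * GG D (real t + 1) (m + 1)"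
    using GG_rec[OF m1 mD tpos] .
  have G1pos: "GG D (real t + 1) m > 0" using GG_pos[OF m1 mD] tpos by simp
  have Ptpos: "P_Bayes X xs = CC xs / real D * GG D (real t) m"
    using P_Bayes_formula[OF assms(1,3) ne] unfolding t_def D_def m_def S_def .
  have gam1: "gam D t m = GG D (real t + 1) m" using mD by (intro gam_GG) simp
  have gam2: "gam D t (m+1) = GG D (real t + 1) (m+1)" using mD by (intro gam_GG) simp
  have b: "beta D t m = (real D - real m) / 2 * (GG D (real t + 1) (m+1) / GG D (real t + 1) m)"
    unfolding beta_def gam1 gam2 ..
  show ?thesis
  proof (cases "c > 0")
    case True
    then have iS: "i \<in> S" unfolding c_def S_def cnt_def by (metis count_list_0_iff less_not_refl)
    have setapp: "set (xs @ [i]) = S" using iS unfolding S_def by auto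
    have "CC (xs @ [i]) = (\<Prod>j\<in>S. Gamma (real (cnt xs j + (if j = i then 1 else 0)) + 1/2) / Gamma (1/2))"
      unfolding CC_def setapp cntapp ..
    also have "\<dots> = Gamma (real (c + 1) + 1/2) / Gamma (1/2) * (\<Prod>j\<in>S - {i}. f j)"
    proof -
      define F where "F j = Gamma (real (cnt xs j + (if j = i then 1 else 0)) + 1/2) / Gamma (1/2)" for j
      have "(\<Prod>j\<in>S. F j) = F i * (\<Prod>j\<in>S - {i}. F j)" by (rule prod.remove[OF fS iS])
      moreover have "(\<Prod>j\<in>S - {i}. F j) = (\<Prod>j\<in>S - {i}. f j)"
        by (rule prod.cong) (auto simp: F_def f_def)
      moreover have "F i = Gamma (real (c + 1) + 1/2) / Gamma (1/2)" by (simp add: F_def c_def)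
      ultimately show ?thesis unfolding F_def by simp
    qed
    also have "Gamma (real (c + 1) + 1/2) = (real c + 1/2) * Gamma (real c + 1/2)"
      using Gamma_plus1_pos[of "real c + 1/2"] by (simp add: add_ac)
    also have "(real c + 1/2) * Gamma (real c + 1/2) / Gamma (1/2) * (\<Prod>j\<in>S - {i}. f j)
       = (real c + 1/2) * (f i * (\<Prod>j\<in>S - {i}. f j))" unfolding f_def c_def by simp
    also have "f i * (\<Prod>j\<in>S - {i}. f j) = CC xs"
      unfolding CC_def S_def[symmetric] f_def[symmetric] using prod.remove[OF fS iS, of f] by simp
    finally have CCa: "CC (xs @ [i]) = (real c + 1/2) * CC xs" .
    have Pa: "P_Bayes X (xs @ [i]) = (real c + 1/2) * CC xs / real D * GG D (real t + 1) m"
      using P_Bayes_formula[OF assms(1), of "xs @ [i]"] assms(3,5) CCa setapp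
      unfolding t_def D_def m_def by (simp add: add.commute)
    have "P_Bayes_cond X xs i = (real c + 1/2) * GG D (real t + 1) m / GG D (real t) m"
      unfolding P_Bayes_cond_def Pa Ptpos using Cpos Dpos by (intro alg2) auto
    also have "\<dots> = (real c + 1/2) / (real t + real m / 2 + beta D t m)"
      unfolding b Gt using G1pos by (rule alg3)
    finally show ?thesis using True unfolding t_def D_def m_def S_def c_def Let_def by simp
  next
    case False
    then have iS: "i \<notin> S" unfolding c_def S_def cnt_def by (metis count_list_0_iff gr0I)
    have setapp: "set (xs @ [i]) = insert i S" unfolding S_def by auto
    have mD': "m < D" unfolding m_def D_def
      using psubset_card_mono[OF assms(1), of S] assms(3,5) iS unfolding S_def by auto
    have "CC (xs @ [i]) = (\<Prod>j\<in>insert i S. Gamma (real (cnt xs j + (if j = i then 1 else 0)) + 1/2) / Gamma (1/2))"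
      unfolding CC_def setapp cntapp ..
    also have "\<dots> = Gamma (real (c + 1) + 1/2) / Gamma (1/2) * (\<Prod>j\<in>S. f j)"
    proof -
      define F where "F j = Gamma (real (cnt xs j + (if j = i then 1 else 0)) + 1/2) / Gamma (1/2)" for j
      have "(\<Prod>j\<in>insert i S. F j) = F i * (\<Prod>j\<in>S. F j)" by (rule prod.insert[OF fS iS])
      moreover have "(\<Prod>j\<in>S. F j) = (\<Prod>j\<in>S. f j)"
        by (rule prod.cong) (use iS in \<open>auto simp: F_def f_def\<close>)
      moreover have "F i = Gamma (real (c + 1) + 1/2) / Gamma (1/2)" by (simp add: F_def c_def)
      ultimately show ?thesis unfolding F_def by simp
    qed
    also have "Gamma (real (c + 1) + 1/2) = 1/2 * Gamma (1/2)"
      using False Gamma_plus1_pos[of "1/2"] by (simp add: add_ac)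
    also have "(\<Prod>j\<in>S. f j) = CC xs" unfolding CC_def S_def f_def ..
    finally have CCa: "CC (xs @ [i]) = 1/2 * CC xs" by simp
    have cardS: "card (insert i S) = m + 1" using iS fS unfolding m_def by simp
    have Pa: "P_Bayes X (xs @ [i]) = 1/2 * CC xs / real D * GG D (real t + 1) (m + 1)"
      using P_Bayes_formula[OF assms(1), of "xs @ [i]"] assms(3,5) CCa setapp cardS
      unfolding t_def D_def by (simp add: add.commute)
    have "P_Bayes_cond X xs i = 1/2 * GG D (real t + 1) (m + 1) / GG D (real t) m"
      unfolding P_Bayes_cond_def Pa Ptpos using Cpos Dpos alg2[of "CC xs" "real D" "1/2"] by auto
    also have "\<dots> = (beta D t m / (real D - real m)) / (real t + real m / 2 + beta D t m)"
      unfolding b Gt using G1pos mD' by (intro alg4) auto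
    finally show ?thesis using False unfolding t_def D_def m_def S_def c_def Let_def by simp
  qed
qed

end
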